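(* Let $h\ge1$, $P(u)=u^{-h}+u^{-h+1}+\dots+u^{h-1}+u^h$, and let $U(z)$ be the root of $1-z^hP(U)=0$ whose expansion at $0$ begins $U(z)=z+\cdots$. Then $U(z)$ is a power series in $z$ (not a genuine Puiseux series), and, with $\omega=e^{2\pi\mathrm{i}/h}$, the small roots $u_i(z)$ and the large roots $v_i(z)$ of $1-zP(u)=0$ are $$u_i(z)=U(\omega^{i-1}z^{1/h}),\qquad v_i(z)=1/U(\omega^{i-1}z^{1/h}),\qquad i=1,\dots,h.$$ Moreover, for every integer $m\ge1$, $$U^m(z)=\sum_{n\ge m}\frac mn\binom{n/h}{n-m}_{2h+1}z^n.$$
   Context: Small roots of $1-zP(u)=0$ are the roots (Puiseux series in $z$) tending to $0$ as $z\to0$; large roots are those with $|v(z)|\to\infty$ as $z\to0$. For a real number $\alpha$, an integer $m\ge1$ and an integer $k$, $\binom{\alpha}{k}_m:=[u^k](1+u+\dots+u^{m-1})^{\alpha}$, where the power is the formal power series with constant term $1$ (so the value is $0$ for $k<0$). *)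

theory Defs
  imports "HOL-Computational_Algebra.Computational_Algebra" "HOL-Library.Multiset"
begin

(* Q(u) = 1 + u + ... + u^(2h), as a polynomial; u^h P(u) = Q(u). *)
definition Qpoly :: "nat \<Rightarrow> 'a::comm_ring_1 poly" where
  "Qpoly h = (\<Sum>k\<le>2*h. monom 1 k)"

(* The equation 1 - z P(u) = 0, multiplied by u^h: u^h - z Q(u) = 0,
   as a polynomial in u with coefficients in the Laurent series field C((t)),
   where z = t^h (t plays the role of z^(1/h)). *)
definition root_eq_poly :: "nat \<Rightarrow> complex fls poly" where
  "root_eq_poly h = monom 1 h - smult (fls_X ^ h) (Qpoly h)"

(* small roots: tend to 0 (positive valuation); large roots: tend to infinity *)
definition small_roots :: "complex fls poly \<Rightarrow> complex fls multiset" where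
  "small_roots p = filter_mset (\<lambda>r. r \<noteq> 0 \<and> 0 < fls_subdegree r) (proots p)"

definition large_roots :: "complex fls poly \<Rightarrow> complex fls multiset" where
  "large_roots p = filter_mset (\<lambda>r. r \<noteq> 0 \<and> fls_subdegree r < 0) (proots p)"

(* binom_m alpha m k = [u^k] (1 + u + ... + u^(m-1))^alpha, 0 for k < 0 *)
definition gbinom_m :: "real \<Rightarrow> nat \<Rightarrow> int \<Rightarrow> real" where
  "gbinom_m \<alpha> m k = (if k < 0 then 0 else
     (fps_binomial \<alpha> oo (\<Sum>j\<in>{1..<m}. fps_X ^ j)) $ nat k)"

end

theory Submission
  imports Defs
begin


lemma fls_residue_sum: "fls_residue (sum f A) = (\<Sum>i\<in>A. fls_residue (f i))"
  by (induction A rule: infinite_finite_induct) (simp_all add: fls_residue_add)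

lemma fps_to_fls_sum: "fps_to_fls (sum f A) = (\<Sum>i\<in>A. fps_to_fls (f i))"
  by (induction A rule: infinite_finite_induct) simp_all

lemma fps_split_at:
  fixes G :: "'a::comm_ring_1 fps"
  shows "G = (\<Sum>i=0..j. fps_const (G$i) * fps_X^i) + fps_X^(Suc j) * fps_shift (Suc j) G"
  proof (rule fps_ext)
  fix n
  have "(fps_X^(Suc j) * fps_shift (Suc j) G) $ n = (if n < Suc j then 0 else G $ n)"
    by (simp only: fps_X_power_mult_nth) simp
  then show "G $ n = ((\<Sum>i=0..j. fps_const (G$i) * fps_X^i) + fps_X^(Suc j) * fps_shift (Suc j) G) $ n"
    by (simp only: fps_add_nth fps_sum_rep_nth) auto
qed

lemma res_inv_pow_deriv:
  fixes u :: "complex fls"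
  assumes "u \<noteq> 0"
  shows "fls_residue (inverse u ^ Suc (Suc q) * fls_deriv u) = 0"
proof -
  have d: "fls_deriv (inverse u ^ Suc q) = - of_nat (Suc q) * (inverse u ^ Suc (Suc q) * fls_deriv u)"
  proof -
    have "fls_deriv (inverse u ^ Suc q) = of_nat (Suc q) * inverse u ^ q * fls_deriv (inverse u)"
      using fls_deriv_power[of "inverse u" "Suc q"] by simp
    also have "\<dots> = - of_nat (Suc q) * (inverse u ^ Suc (Suc q) * fls_deriv u)"
      by (simp add: fls_inverse_deriv power2_eq_square algebra_simps)
    finally show ?thesis .
  qed
  have "inverse u ^ Suc (Suc q) * fls_deriv u = fls_const (- 1 / of_nat (Suc q)) * fls_deriv (inverse u ^ Suc q)"
    unfolding d by (simp add: fls_const_divide_const fls_of_nat fls_const_mult_const[symmetric] del: of_nat_Suc)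
  then show ?thesis by (simp only: fls_residue_fls_const_times fls_residue_deriv) simp
qed

lemma inv_pow_cancel:
  fixes u :: "'a::field fls"
  assumes "u \<noteq> 0"
  shows "inverse u ^ k * u ^ k = 1"
  by (simp only: power_mult_distrib[symmetric] left_inverse[OF assms] power_one)

lemma res_term:
  fixes u :: "complex fls"
  assumes "u \<noteq> 0" "fls_subdegree u = 1" "i \<le> j"
  shows "fls_residue (inverse u ^ Suc j * u ^ i * fls_deriv u) = (if i = j then 1 else 0)"
proof -
  have "inverse u ^ Suc j * u ^ i = inverse u ^ (Suc j - i) * (inverse u ^ i * u ^ i)"
    using assms(3) by (simp add: power_add[symmetric])
  also have "inverse u ^ i * u ^ i = 1"
    using assms(1) by (rule inv_pow_cancel)
  finally have e: "inverse u ^ Suc j * u ^ i = inverse u ^ (Suc j - i)" by simp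
  show ?thesis
  proof (cases "i = j")
    case True
    have h: "inverse u ^ Suc j * u ^ i * fls_deriv u = inverse u * fls_deriv u"
      using e True by simp
    show ?thesis unfolding h using fls_residue_deriv_times_inverse_eq_subdegree(2)[of u] assms(2) True
      by (simp del: fls_residue_def)
  next
    case False
    then have "Suc j - i = Suc (Suc (j - i - 1))" using assms(3) by simp
    then have h: "inverse u ^ Suc j * u ^ i * fls_deriv u = inverse u ^ Suc (Suc (j - i - 1)) * fls_deriv u"
      using e by simp
    show ?thesis unfolding h using False res_inv_pow_deriv[OF assms(1)] by (simp del: fls_residue_def power_Suc)
  qed
qed

lemma res_comp:
  fixes U G :: "complex fps"
  assumes U0: "U$0 = 0" and U1: "U$1 \<noteq> 0"
  shows "fls_residue (inverse (fps_to_fls U) ^ Suc j * fps_to_fls (G oo U) * fps_to_fls (fps_deriv U)) = G $ j"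
proof -
  define u where "u = fps_to_fls U"
  define R where "R = fps_shift (Suc j) G"
  have du: "fps_to_fls (fps_deriv U) = fls_deriv u" by (simp add: u_def fls_deriv_fps_to_fls)
  have Unz: "U \<noteq> 0" using U1 by auto
  have "subdegree U = 1" using U0 U1 by (intro subdegreeI) auto
  then have sd: "fls_subdegree u = 1" by (simp add: u_def fls_subdegree_fls_to_fps)
  have unz: "u \<noteq> 0" using Unz by (simp add: u_def)
  have "G oo U = ((\<Sum>i=0..j. fps_const (G$i) * fps_X^i) oo U) + ((fps_X^(Suc j) * R) oo U)"
    by (subst fps_split_at[of G j]) (simp add: R_def fps_compose_add_distrib)
  also have "\<dots> = (\<Sum>i=0..j. fps_const (G$i) * U^i) + U^(Suc j) * (R oo U)"
    using U0 by (simp add: fps_compose_sum_distrib fps_compose_mult_distrib fps_X_power_compose)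
  finally have GU: "fps_to_fls (G oo U) = (\<Sum>i=0..j. fls_const (G$i) * u^i) + u^(Suc j) * fps_to_fls (R oo U)"
    by (simp add: fps_to_fls_sum fls_times_fps_to_fls fps_to_fls_power fps_const_to_fls u_def)
  have "inverse u ^ Suc j * fps_to_fls (G oo U) * fps_to_fls (fps_deriv U)
     = (\<Sum>i=0..j. fls_const (G$i) * (inverse u ^ Suc j * u ^ i * fls_deriv u))
       + (inverse u ^ Suc j * u ^ Suc j) * fps_to_fls ((R oo U) * fps_deriv U)"
    unfolding GU du by (simp add: algebra_simps sum_distrib_left sum_distrib_right fls_times_fps_to_fls u_def fls_deriv_fps_to_fls)
  also have "inverse u ^ Suc j * u ^ Suc j = 1"
    using unz by (rule inv_pow_cancel)
  finally have E: "inverse u ^ Suc j * fps_to_fls (G oo U) * fps_to_fls (fps_deriv U)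
     = (\<Sum>i=0..j. fls_const (G$i) * (inverse u ^ Suc j * u ^ i * fls_deriv u))
       + fps_to_fls ((R oo U) * fps_deriv U)" by simp
  have "fls_residue (fps_to_fls ((R oo U) * fps_deriv U)) = 0"
    by (rule fls_residue_power_series) (simp add: fls_subdegree_fls_to_fps_gt0)
  then have "fls_residue (inverse u ^ Suc j * fps_to_fls (G oo U) * fps_to_fls (fps_deriv U))
      = (\<Sum>i=0..j. G$i * (if i = j then 1 else 0))"
    unfolding E fls_residue_add fls_residue_sum fls_residue_fls_const_times
    using res_term[OF unz sd] by simp
  also have "\<dots> = G $ j" by (simp add: if_distrib sum.delta' cong: if_cong)
  finally show ?thesis by (simp add: u_def)
qed

lemma lagrange:
  fixes U phi :: "complex fps"
  assumes eq: "U = fps_X * (phi oo U)" and p0: "phi$0 \<noteq> 0" and m1: "1 \<le> m" and mn: "m \<le> n"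
  shows "of_nat n * (U^m)$n = of_nat m * (phi^n)$(n-m)"
proof -
  have U0: "U$0 = 0" by (subst eq) simp
  have U1: "U$1 = phi$0" by (subst eq) (simp add: fps_X_mult_nth)
  define u where "u = fps_to_fls U"
  define w where "w = fps_to_fls (phi oo U)"
  have "phi oo U \<noteq> 0" using p0 by (metis fps_compose_nth_0 fps_zero_nth)
  then have wnz: "w \<noteq> 0" by (simp add: w_def)
  have uXw: "u = fls_X * w" unfolding u_def w_def by (subst eq) (simp add: fls_times_fps_to_fls)
  have unz: "u \<noteq> 0" using wnz by (simp add: uXw)
  have Xinv: "fls_X_inv = inverse u * w"
    using wnz by (simp add: uXw fls_inverse_X[symmetric] field_simps)
  have "of_nat n * (U^m)$n = fps_deriv (U^m) $ (n-1)"
    using m1 mn by (simp add: fps_deriv_nth)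
  also have "\<dots> = fls_residue (fls_X_inv ^ n * fps_to_fls (fps_deriv (U^m)))"
  proof -
    have "nat (int n - 1) = n - 1" using m1 mn by simp
    then show ?thesis using m1 mn by (simp add: fls_X_inv_power_times_conv_shift)
  qed
  also have "fls_X_inv ^ n * fps_to_fls (fps_deriv (U^m))
     = fls_const (of_nat m) * (inverse u ^ n * u ^ (m-1)) * w ^ n * fls_deriv u"
    unfolding Xinv
    by (simp add: fps_deriv_power fls_times_fps_to_fls fps_to_fls_power u_def fls_deriv_fps_to_fls
        fps_const_to_fls power_mult_distrib algebra_simps)
  also have "inverse u ^ n * u ^ (m-1) = inverse u ^ Suc (n-m)"
  proof -
    have "inverse u ^ n = inverse u ^ Suc (n-m) * inverse u ^ (m-1)"
      using m1 mn by (simp only: power_add[symmetric]) (simp add: Suc_diff_le)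
    then show ?thesis using inv_pow_cancel[OF unz, of "m-1"] by (simp add: mult.assoc)
  qed
  also have "w ^ n = fps_to_fls (phi^n oo U)"
    using U0 by (simp add: w_def fps_to_fls_power[symmetric] fps_compose_power)
  also have "fls_deriv u = fps_to_fls (fps_deriv U)" by (simp add: u_def fls_deriv_fps_to_fls)
  finally show ?thesis
    using res_comp[OF U0, where G="phi^n" and j="n-m"] U1 p0
    by (simp add: mult.assoc fls_residue_fls_const_times u_def del: fls_residue_def)
qed



definition cmap :: "real fps \<Rightarrow> complex fps" where
  "cmap f = Abs_fps (\<lambda>n. of_real (f $ n))"

lemma cmap_nth [simp]: "cmap f $ n = of_real (f $ n)"
  by (simp add: cmap_def)

lemma cmap_add: "cmap (a + b) = cmap a + cmap b"
  by (rule fps_ext) simp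

lemma cmap_mult: "cmap (a * b) = cmap a * cmap b"
  by (rule fps_ext) (simp add: fps_mult_nth)

lemma cmap_one: "cmap 1 = 1"
  by (rule fps_ext) simp

lemma cmap_X: "cmap fps_X = fps_X"
  by (rule fps_ext) (simp add: fps_X_def)

lemma cmap_power: "cmap (a ^ n) = cmap a ^ n"
  by (induction n) (simp_all add: cmap_one cmap_mult)

lemma cmap_sum: "cmap (sum f A) = (\<Sum>i\<in>A. cmap (f i))"
  by (rule fps_ext) (simp add: fps_sum_nth)

lemma cmap_compose: "cmap (a oo b) = cmap a oo cmap b"
  by (rule fps_ext) (simp add: fps_compose_nth cmap_power[symmetric])

lemma of_real_gchoose: "of_real (r gchoose k) = (of_real r :: complex) gchoose k"
  by (simp add: gbinomial_prod_rev)

lemma cmap_binomial: "cmap (fps_binomial r) = fps_binomial (of_real r)"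
  by (rule fps_ext) (simp add: of_real_gchoose)

definition Sc :: "nat \<Rightarrow> complex fps" where
  "Sc h = (\<Sum>j\<in>{1..<2*h+1}. fps_X ^ j)"

definition phi :: "nat \<Rightarrow> complex fps" where
  "phi h = fps_binomial (1 / of_nat h) oo Sc h"

lemma Sc0: "Sc h $ 0 = 0"
  by (simp add: Sc_def fps_sum_nth)

lemma phi0: "phi h $ 0 = 1"
  by (simp add: phi_def)

lemma phi_power: "phi h ^ n = fps_binomial (of_nat n / of_nat h) oo Sc h"
  by (simp add: phi_def fps_compose_power[OF Sc0] fps_binomial_power)

lemma one_plus_Sc: "1 + Sc h = (\<Sum>k\<le>2*h. fps_X ^ k)"
proof -
  have "{..2*h} = insert 0 {1..<2*h+1}" by auto
  then show ?thesis by (simp add: Sc_def)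
qed

lemma phi_power_h:
  assumes "h \<ge> 1"
  shows "phi h ^ h = (\<Sum>k\<le>2*h. fps_X ^ k)"
proof -
  have "phi h ^ h = fps_binomial 1 oo Sc h" using assms by (simp add: phi_power)
  also have "\<dots> = 1 + Sc h" by (simp add: fps_binomial_1 fps_compose_add_distrib Sc0)
  finally show ?thesis by (simp add: one_plus_Sc)
qed

lemma phi_power_coeff:
  assumes "m \<le> n"
  shows "(phi h ^ n) $ (n - m) = complex_of_real (gbinom_m (real n / real h) (2*h+1) (int n - int m))"
proof -
  have Sr: "cmap (\<Sum>j\<in>{1..<2*h+1}. fps_X ^ j) = Sc h"
    by (simp only: cmap_sum cmap_power cmap_X Sc_def)
  have "complex_of_real (gbinom_m (real n / real h) (2*h+1) (int n - int m))
      = cmap (fps_binomial (real n / real h) oo (\<Sum>j\<in>{1..<2*h+1}. fps_X ^ j)) $ (n - m)"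
    using assms by (simp add: gbinom_m_def nat_diff_distrib del: cmap_nth) (simp add: of_nat_diff)
  also have "\<dots> = (phi h ^ n) $ (n - m)"
    by (simp only: cmap_compose cmap_binomial Sr phi_power) simp
  finally show ?thesis by simp
qed



lemma Q_compose:
  fixes U :: "complex fps"
  assumes "U $ 0 = 0"
  shows "(\<Sum>k\<le>2*h. fps_X ^ k) oo U = (\<Sum>k\<le>2*h. U ^ k)"
  using assms by (simp add: fps_compose_sum_distrib fps_X_power_compose[OF assms])

lemma fix_imp_sol:
  assumes h: "h \<ge> 1" and eq: "U = fps_X * (phi h oo U)"
  shows "U $ 0 = 0 \<and> U $ 1 = 1 \<and> U ^ h = fps_X ^ h * (\<Sum>k\<le>2*h. U ^ k)"
proof -
  have U0: "U$0 = 0" by (subst eq) simp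
  have U1: "U$1 = 1" by (subst eq) (simp add: fps_X_mult_nth phi0)
  have "U ^ h = fps_X ^ h * (phi h oo U) ^ h" by (subst eq) (simp add: power_mult_distrib)
  also have "(phi h oo U) ^ h = (\<Sum>k\<le>2*h. U ^ k)"
    using U0 h by (simp add: fps_compose_power phi_power_h Q_compose)
  finally show ?thesis using U0 U1 by simp
qed

lemma root_unique:
  fixes a b :: "complex fps"
  assumes ab: "a ^ h = b ^ h" and a0: "a $ 0 = b $ 0" and nz: "a $ 0 \<noteq> 0" and h: "h \<ge> 1"
  shows "a = b"
proof -
  define s where "s = (\<Sum>i<h. b ^ (h - Suc i) * a ^ i)"
  have "s $ 0 = (\<Sum>i<h. (a$0) ^ (h - 1))"
    unfolding s_def fps_sum_nth
  proof (rule sum.cong)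
    fix i assume "i \<in> {..<h}"
    then have "h - Suc i + i = h - 1" by simp
    then show "(b ^ (h - Suc i) * a ^ i) $ 0 = (a$0) ^ (h - 1)"
      using a0 by (simp add: fps_nth_power_0 power_add[symmetric])
  qed simp
  also have "\<dots> = of_nat h * (a$0)^(h-1)" by simp
  finally have "s $ 0 \<noteq> 0" using h nz by simp
  then have "s \<noteq> 0" by auto
  moreover have "a^h - b^h = (a - b) * s" unfolding s_def by (rule power_diff_sumr2)
  then have "(a - b) * s = 0" using ab by simp
  ultimately show ?thesis by (metis mult_eq_0_iff right_minus_eq)
qed

lemma sol_imp_fix:
  assumes h: "h \<ge> 1" and U0: "U $ 0 = 0" and U1: "U $ 1 = 1"
    and eq: "U ^ h = fps_X ^ h * (\<Sum>k\<le>2*h. U ^ k)"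
  shows "U = fps_X * (phi h oo U)"
proof -
  define V where "V = fps_shift 1 U"
  have UV: "U = fps_X * V" by (rule fps_ext) (simp add: V_def fps_X_mult_nth U0)
  have "(\<Sum>k\<le>2*h. U ^ k) = (phi h oo U) ^ h"
    using U0 h by (simp add: fps_compose_power phi_power_h Q_compose)
  then have "fps_X ^ h * V ^ h = fps_X ^ h * (phi h oo U) ^ h"
    using eq by (simp add: UV power_mult_distrib)
  then have Vh: "V ^ h = (phi h oo U) ^ h" by simp
  have V0: "V $ 0 = 1" using U1 by (simp add: V_def)
  have c0: "(phi h oo U) $ 0 = 1" by (simp add: phi0)
  have "V = phi h oo U" by (rule root_unique[OF Vh]) (simp_all only: V0 c0 h, simp)
  then show ?thesis using UV by simp
qed

lemma coeff_formula:
  assumes h: "h \<ge> 1" and eq: "U = fps_X * (phi h oo U)" and m: "m \<ge> 1"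
  shows "(U ^ m) $ n = (if n \<ge> m then complex_of_real (real m / real n *
                 gbinom_m (real n / real h) (2*h+1) (int n - int m)) else 0)"
proof (cases "n \<ge> m")
  case True
  have "of_nat n * (U^m)$n = of_nat m * (phi h ^ n)$(n-m)"
    by (rule lagrange[OF eq]) (use assms(3) True in \<open>simp_all add: phi0\<close>)
  moreover have "n \<noteq> 0" using m True by simp
  ultimately have "(U^m)$n = of_nat m / of_nat n * (phi h ^ n)$(n-m)"
    by (simp add: eq_divide_eq mult.commute)
  then show ?thesis using True
    by (simp add: phi_power_coeff)
next
  case False
  have "U ^ m = fps_X ^ m * (phi h oo U) ^ m" by (subst eq) (simp add: power_mult_distrib)
  then show ?thesis using False by (simp add: fps_X_power_mult_nth)
qed

lemma exists_fix:
  assumes h: "h \<ge> 1"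
  shows "\<exists>U. U = fps_X * (phi h oo U)"
proof -
  define psi where "psi = fps_X * inverse (phi h)"
  have p0: "psi $ 0 = 0" by (simp add: psi_def)
  have p1: "psi $ 1 \<noteq> 0" by (simp add: psi_def fps_X_mult_nth phi0)
  define U where "U = fps_inv psi"
  have U0: "U $ 0 = 0" by (simp add: U_def fps_inv_def)
  have "psi oo U = fps_X" unfolding U_def by (rule fps_inv_right[OF p0 p1])
  moreover have "psi oo U = U * inverse (phi h oo U)"
    using U0 by (simp add: psi_def fps_compose_mult_distrib fps_inverse_compose phi0)
  ultimately have X: "fps_X = U * inverse (phi h oo U)" by simp
  have w0: "(phi h oo U) $ 0 \<noteq> 0" by (simp add: phi0)
  have "fps_X * (phi h oo U) = U * (inverse (phi h oo U) * (phi h oo U))"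
    by (simp add: X mult.assoc)
  also have "\<dots> = U" using inverse_mult_eq_1[OF w0] by simp
  finally show ?thesis by (rule exI[where x=U, OF sym])
qed



lemma poly_root_eq: "poly (root_eq_poly h) r = r ^ h - fls_X ^ h * (\<Sum>k\<le>2*h. r ^ k)"
  by (simp add: root_eq_poly_def Qpoly_def poly_monom poly_sum)

lemma coeff_root_eq: "coeff (root_eq_poly h) i = (if i = h then 1 else 0) - (if i \<le> 2*h then fls_X ^ h else 0)"
  by (simp add: root_eq_poly_def Qpoly_def coeff_sum coeff_monom)

lemma root_eq_nz_deg:
  assumes "h \<ge> 1"
  shows "root_eq_poly h \<noteq> 0" "degree (root_eq_poly h) \<le> 2*h"
proof -
  have "coeff (root_eq_poly h) (2*h) = - (fls_X ^ h)" using assms by (simp add: coeff_root_eq)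
  then show "root_eq_poly h \<noteq> 0" by auto
  show "degree (root_eq_poly h) \<le> 2*h" by (rule degree_le) (simp add: coeff_root_eq)
qed

lemma inverse_root:
  fixes s :: "complex fls"
  assumes s: "s \<noteq> 0" and eq: "s ^ h = fls_X ^ h * (\<Sum>k\<le>2*h. s ^ k)"
  shows "poly (root_eq_poly h) (inverse s) = 0"
proof -
  have "s ^ (2*h) * poly (root_eq_poly h) (inverse s)
      = s ^ (2*h) * inverse s ^ h - fls_X ^ h * (\<Sum>k\<le>2*h. s ^ (2*h) * inverse s ^ k)"
    by (simp add: poly_root_eq algebra_simps sum_distrib_left)
  also have "(\<Sum>k\<le>2*h. s ^ (2*h) * inverse s ^ k) = (\<Sum>k\<le>2*h. s ^ (2*h - k))"
  proof (rule sum.cong)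
    fix k assume "k \<in> {..2*h}"
    then have "s ^ (2*h) = s ^ (2*h - k) * s ^ k" by (simp add: power_add[symmetric])
    then show "s ^ (2*h) * inverse s ^ k = s ^ (2*h - k)"
      using s by (simp add: power_inverse[symmetric] field_simps)
  qed simp
  also have "\<dots> = (\<Sum>k\<le>2*h. s ^ k)"
    by (rule sum.reindex_bij_witness[where i="\<lambda>k. 2*h - k" and j="\<lambda>k. 2*h - k"]) auto
  also have "s ^ (2*h) * inverse s ^ h = s ^ h"
  proof -
    have "s ^ (2*h) = s ^ h * s ^ h" by (simp add: mult_2 power_add)
    then show ?thesis using s by (simp add: power_inverse[symmetric] field_simps)
  qed
  finally have "s ^ (2*h) * poly (root_eq_poly h) (inverse s) = 0" using eq by simp
  then show ?thesis using s by simp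
qed

lemma omega_facts:
  assumes h: "h \<ge> 1"
  shows "cis (2*pi/real h) ^ h = 1" "inj_on (\<lambda>i. cis (2*pi/real h) ^ i) {..<h}"
proof -
  show "cis (2*pi/real h) ^ h = 1" using h by (simp add: DeMoivre)
  have "inj_on (\<lambda>k. cis (2 * pi * real k / real h)) {..<h}"
    using bij_betw_roots_unity[of h] h by (simp add: bij_betw_def)
  moreover have "(\<lambda>i. cis (2*pi/real h) ^ i) = (\<lambda>k. cis (2 * pi * real k / real h))"
    by (simp add: DeMoivre mult.commute)
  ultimately show "inj_on (\<lambda>i. cis (2*pi/real h) ^ i) {..<h}" by simp
qed

lemma compose_root:
  fixes U :: "complex fps"
  assumes U0: "U$0 = 0" and eq: "U^h = fps_X^h * (\<Sum>k\<le>2*h. U^k)" and c: "c ^ h = 1"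
  shows "(U oo (fps_const c * fps_X))^h = fps_X^h * (\<Sum>k\<le>2*h. (U oo (fps_const c * fps_X))^k)"
proof -
  define L where "L = fps_const c * fps_X"
  have L0: "L $ 0 = 0" by (simp add: L_def)
  have "(U oo L)^h = U^h oo L" by (rule fps_compose_power[OF L0])
  also have "\<dots> = (fps_X^h oo L) * (\<Sum>k\<le>2*h. U^k oo L)"
    by (simp add: eq fps_compose_mult_distrib[OF L0] fps_compose_sum_distrib)
  also have "fps_X^h oo L = fps_X^h"
  proof -
    have "fps_X^h oo L = L^h" by (rule fps_X_power_compose[OF L0])
    also have "\<dots> = fps_const (c^h) * fps_X^h" by (simp add: L_def power_mult_distrib fps_const_power)
    finally show ?thesis using c by simp
  qed
  also have "(\<Sum>k\<le>2*h. U^k oo L) = (\<Sum>k\<le>2*h. (U oo L)^k)"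
    by (simp add: fps_compose_power[OF L0])
  finally show ?thesis by (simp add: L_def)
qed

lemma mset_eq_proots:
  fixes p :: "'a::idom poly"
  assumes p: "p \<noteq> 0" and deg: "degree p \<le> card S" and fin: "finite S"
    and roots: "\<And>x. x \<in> S \<Longrightarrow> poly p x = 0"
  shows "proots p = mset_set S"
proof -
  have sub: "mset_set S \<subseteq># proots p"
  proof (rule mset_subset_eqI)
    fix a
    show "count (mset_set S) a \<le> count (proots p) a"
    proof (cases "a \<in> S")
      case True
      then have "order a p \<noteq> 0" using roots[OF True] p order_root by blast
      then show ?thesis using True fin p by (simp add: count_proots)
    qed simp
  qed
  then have "proots p = mset_set S + (proots p - mset_set S)"
    by (simp add: subset_mset.add_diff_inverse)
  moreover have "size (proots p) \<le> size (mset_set S)"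
    using size_proots_le[of p] deg by simp
  ultimately have "size (proots p - mset_set S) = 0"
    by (metis add_le_same_cancel1 le_zero_eq size_union)
  then have "proots p - mset_set S = {#}" by simp
  then show ?thesis using \<open>proots p = _\<close> by simp
qed

lemma roots_main:
  fixes U :: "complex fps"
  assumes h: "h \<ge> 1" and U0: "U $ 0 = 0" and U1: "U $ 1 = 1"
    and eq: "U ^ h = fps_X ^ h * (\<Sum>k\<le>2*h. U ^ k)"
  shows "(let \<omega> = cis (2 * pi / real h);
             u = (\<lambda>i::nat. fps_to_fls (U oo (fps_const (\<omega> ^ i) * fps_X)))
         in small_roots (root_eq_poly h) = image_mset u (mset_set {..<h})
          \<and> large_roots (root_eq_poly h) = image_mset (\<lambda>i. inverse (u i)) (mset_set {..<h}))"
proof -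
  define \<omega> where "\<omega> = cis (2 * pi / real h)"
  define u where "u = (\<lambda>i::nat. fps_to_fls (U oo (fps_const (\<omega> ^ i) * fps_X)))"
  define p where "p = root_eq_poly h"
  have wh: "\<omega> ^ h = 1" and winj: "inj_on (\<lambda>i. \<omega> ^ i) {..<h}"
    using omega_facts[OF h] by (simp_all add: \<omega>_def)
  have wnz: "\<omega> \<noteq> 0" by (simp add: \<omega>_def)
  have u1: "fls_nth (u i) 1 = \<omega> ^ i" for i using U1 by (simp add: u_def)
  have u0: "fls_nth (u i) k = 0" if "k < 1" for i k
    using that U0 by (simp add: u_def)
  have usd: "fls_subdegree (u i) = 1" for i
    by (rule fls_subdegree_eqI) (simp_all add: u1 wnz u0)
  have unz: "u i \<noteq> 0" for i using u1[of i] wnz by auto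
  have uinj: "inj_on u {..<h}"
  proof (rule inj_onI)
    fix i j assume "i \<in> {..<h}" "j \<in> {..<h}" "u i = u j"
    then show "i = j" using u1[of i] u1[of j] winj by (auto dest: inj_onD)
  qed
  have iuinj: "inj_on (\<lambda>i. inverse (u i)) {..<h}"
    using uinj by (auto simp: inj_on_def)
  define A where "A = u ` {..<h}"
  define B where "B = (\<lambda>i. inverse (u i)) ` {..<h}"
  have cA: "card A = h" using uinj by (simp add: A_def card_image)
  have cB: "card B = h" using iuinj by (simp add: B_def card_image)
  have Asd: "x \<in> A \<Longrightarrow> x \<noteq> 0 \<and> fls_subdegree x = 1" for x by (auto simp: A_def usd unz)
  have Bsd: "x \<in> B \<Longrightarrow> x \<noteq> 0 \<and> fls_subdegree x = -1" for x
    by (auto simp: B_def usd unz fls_inverse_subdegree)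
  have disj: "A \<inter> B = {}" using Asd Bsd by fastforce
  have cAB: "card (A \<union> B) = 2*h" using disj cA cB
    by (simp add: card_Un_disjoint A_def B_def)
  have uroot: "u i ^ h = fls_X ^ h * (\<Sum>k\<le>2*h. u i ^ k)" for i
  proof -
    have "(\<omega>^i)^h = 1" using wh by (metis power_mult power_one mult.commute)
    from arg_cong[OF compose_root[OF U0 eq this], of fps_to_fls] show ?thesis
      by (simp add: u_def fls_times_fps_to_fls fps_to_fls_power fps_to_fls_sum)
  qed
  have roots: "poly p x = 0" if "x \<in> A \<union> B" for x
    using that
  proof
    assume "x \<in> A"
    then show ?thesis using uroot by (auto simp: A_def p_def poly_root_eq)
  next
    assume "x \<in> B"
    then show ?thesis using uroot unz by (auto simp: B_def p_def intro: inverse_root)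
  qed
  have P: "proots p = mset_set (A \<union> B)"
    using root_eq_nz_deg[OF h] roots cAB by (intro mset_eq_proots) (simp_all add: p_def A_def B_def)
  have fin: "finite (A \<union> B)" by (simp add: A_def B_def)
  have "small_roots p = mset_set {x \<in> A \<union> B. x \<noteq> 0 \<and> 0 < fls_subdegree x}"
    by (simp add: small_roots_def P filter_mset_mset_set[OF fin])
  also have "{x \<in> A \<union> B. x \<noteq> 0 \<and> 0 < fls_subdegree x} = A"
    using Asd Bsd by force
  also have "mset_set A = image_mset u (mset_set {..<h})"
    by (simp add: A_def image_mset_mset_set[OF uinj])
  finally have S: "small_roots p = image_mset u (mset_set {..<h})" .
  have "large_roots p = mset_set {x \<in> A \<union> B. x \<noteq> 0 \<and> fls_subdegree x < 0}"
    by (simp add: large_roots_def P filter_mset_mset_set[OF fin])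
  also have "{x \<in> A \<union> B. x \<noteq> 0 \<and> fls_subdegree x < 0} = B"
    using Asd Bsd by force
  also have "mset_set B = image_mset (\<lambda>i. inverse (u i)) (mset_set {..<h})"
    by (simp add: B_def image_mset_mset_set[OF iuinj])
  finally have L: "large_roots p = image_mset (\<lambda>i. inverse (u i)) (mset_set {..<h})" .
  show ?thesis using S L by (simp add: Let_def u_def \<omega>_def p_def)
qed


theorem proposition4p5:
  fixes h :: nat
  assumes "h \<ge> 1"
  shows "(\<exists>!U :: complex fps. U $ 0 = 0 \<and> U $ 1 = 1 \<and>
            U ^ h = fps_X ^ h * (\<Sum>k\<le>2*h. U ^ k))
   \<and> (\<forall>U :: complex fps. U $ 0 = 0 \<and> U $ 1 = 1 \<and>
            U ^ h = fps_X ^ h * (\<Sum>k\<le>2*h. U ^ k) \<longrightarrow>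
        (let \<omega> = cis (2 * pi / real h);
             u = (\<lambda>i::nat. fps_to_fls (U oo (fps_const (\<omega> ^ i) * fps_X)))
         in small_roots (root_eq_poly h) = image_mset u (mset_set {..<h})
          \<and> large_roots (root_eq_poly h) = image_mset (\<lambda>i. inverse (u i)) (mset_set {..<h}))
      \<and> (\<forall>m::nat. m \<ge> 1 \<longrightarrow> (\<forall>n::nat. (U ^ m) $ n =
            (if n \<ge> m then complex_of_real (real m / real n *
                 gbinom_m (real n / real h) (2*h+1) (int n - int m)) else 0))))"
proof -
  obtain U0 :: "complex fps" where fx: "U0 = fps_X * (phi h oo U0)"
    using exists_fix[OF assms] by blast
  have sol: "U0 $ 0 = 0 \<and> U0 $ 1 = 1 \<and> U0 ^ h = fps_X ^ h * (\<Sum>k\<le>2*h. U0 ^ k)"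
    by (rule fix_imp_sol[OF assms fx])
  have uniq: "V = U0" if "V $ 0 = 0 \<and> V $ 1 = 1 \<and> V ^ h = fps_X ^ h * (\<Sum>k\<le>2*h. V ^ k)"
    for V :: "complex fps"
  proof -
    have fV: "V = fps_X * (phi h oo V)" using that sol_imp_fix[OF assms] by blast
    show ?thesis
    proof (rule fps_ext)
      fix n
      show "V $ n = U0 $ n"
        using coeff_formula[OF assms fV, of 1 n] coeff_formula[OF assms fx, of 1 n] by simp
    qed
  qed
  have ex1: "\<exists>!U :: complex fps. U $ 0 = 0 \<and> U $ 1 = 1 \<and>
            U ^ h = fps_X ^ h * (\<Sum>k\<le>2*h. U ^ k)"
    using sol uniq by blast
  show ?thesis
  proof (intro conjI ex1 allI impI)
    fix U :: "complex fps"
    assume a: "U $ 0 = 0 \<and> U $ 1 = 1 \<and> U ^ h = fps_X ^ h * (\<Sum>k\<le>2*h. U ^ k)"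
    then show "let \<omega> = cis (2 * pi / real h);
             u = (\<lambda>i::nat. fps_to_fls (U oo (fps_const (\<omega> ^ i) * fps_X)))
         in small_roots (root_eq_poly h) = image_mset u (mset_set {..<h})
          \<and> large_roots (root_eq_poly h) = image_mset (\<lambda>i. inverse (u i)) (mset_set {..<h})"
      using roots_main[OF assms] by blast
    have fU: "U = fps_X * (phi h oo U)" using a sol_imp_fix[OF assms] by blast
    fix m n :: nat
    assume "1 \<le> m"
    then show "(U ^ m) $ n =
            (if n \<ge> m then complex_of_real (real m / real n *
                 gbinom_m (real n / real h) (2*h+1) (int n - int m)) else 0)"
      by (rule coeff_formula[OF assms fU])
  qed
qed

end
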